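(* Let $\alpha_1,\dots,\alpha_r\in\mathbb{T}\setminus\{0\}$, $D=\{\alpha_1,\dots,\alpha_r\}$, $\alpha=(\alpha_1,\dots,\alpha_r)\in\mathbb{T}^r$. Then $$\mathrm{Md}_{\mathbb{T}}(D)\ \ge\ \kappa_{\mathbb{T}}(D):=\max\Big\{\min_{i\in[r]}\|\beta_i\|:\ \beta=(\beta_1,\dots,\beta_r)\in\overline{\mathbb{Z}\alpha}\Big\},$$ where $\overline{\mathbb{Z}\alpha}$ is the closure in $\mathbb{T}^r$ of $\{N\alpha: N\in\mathbb{Z}\}$.
   Context: $\mathbb{T}=\mathbb{R}/\mathbb{Z}$ with Haar probability measure $\mu$; $\|x\|$ is the distance to the nearest integer. $\mathrm{Md}_{\mathbb{T}}(D)=\sup\{\mu(A): A\subset\mathbb{T}\text{ Borel},\ (A-A)\cap D=\emptyset\}$. *)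

theory Defs
  imports "HOL-Analysis.Analysis"
begin

text \<open>The torus T = R/Z is modelled by real representatives; a point of T^r by
a vector in real^'r (r = CARD('r)). Haar probability measure on T corresponds to
Lebesgue measure on Borel subsets of [0,1).\<close>

definition tnorm :: "real \<Rightarrow> real" where
  "tnorm x = min (frac x) (1 - frac x)"

definition tcong :: "real \<Rightarrow> real \<Rightarrow> bool" where
  "tcong x y \<longleftrightarrow> x - y \<in> \<int>"

definition Md_T :: "real set \<Rightarrow> real" where
  "Md_T D = Sup {measure lborel A | A. A \<in> sets borel \<and> A \<subseteq> {0..<1} \<and>
      (\<forall>x\<in>A. \<forall>y\<in>A. \<forall>d\<in>D. \<not> tcong (x - y) d)}"

text \<open>Closure of Z alpha in T^r, as a set of real representatives: the closure in R^r of
Z alpha + Z^r (the preimage of the torus closure under the quotient map).\<close>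
definition Zorbit_closure :: "real^'r \<Rightarrow> (real^'r) set" where
  "Zorbit_closure \<alpha> = closure {of_int N *\<^sub>R \<alpha> + (\<chi> i. of_int (k i)) | N k. True}"

definition kappa_T :: "real^'r::finite \<Rightarrow> real" where
  "kappa_T \<alpha> = Sup {Min (range (\<lambda>i. tnorm (\<beta> $ i))) | \<beta>. \<beta> \<in> Zorbit_closure \<alpha>}"

end

theory Submission
  imports Defs
begin

lemma tnorm_le: assumes "n \<in> \<int>" shows "tnorm x \<le> \<bar>x - n\<bar>"
proof -
  obtain m where m: "n = of_int m" using assms Ints_cases by blast
  have f: "frac x = x - of_int \<lfloor>x\<rfloor>" by (simp add: frac_def)
  have a: "of_int \<lfloor>x\<rfloor> \<le> x" "x < of_int \<lfloor>x\<rfloor> + 1" by linarith+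
  have t1: "tnorm x \<le> x - of_int \<lfloor>x\<rfloor>" "tnorm x \<le> 1 - (x - of_int \<lfloor>x\<rfloor>)"
    unfolding tnorm_def f by simp_all
  show ?thesis
  proof (cases "m \<le> \<lfloor>x\<rfloor>")
    case True
    then have "real_of_int m \<le> of_int \<lfloor>x\<rfloor>" by simp
    then show ?thesis using t1 a m by linarith
  next
    case False
    then have "\<lfloor>x\<rfloor> + 1 \<le> m" by simp
    then have "real_of_int \<lfloor>x\<rfloor> + 1 \<le> real_of_int m" by linarith
    then show ?thesis using t1 a m by linarith
  qed
qed

lemma tnorm_exists: "\<exists>n\<in>\<int>. tnorm x = \<bar>x - n\<bar>"
proof -
  have f: "frac x = x - of_int \<lfloor>x\<rfloor>" by (simp add: frac_def)
  have a: "of_int \<lfloor>x\<rfloor> \<le> x" "x < of_int \<lfloor>x\<rfloor> + 1" by linarith+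
  show ?thesis
  proof (cases "x - of_int \<lfloor>x\<rfloor> \<le> 1 - (x - of_int \<lfloor>x\<rfloor>)")
    case True
    then have "tnorm x = \<bar>x - of_int \<lfloor>x\<rfloor>\<bar>" unfolding tnorm_def f using a by simp
    moreover have "(of_int \<lfloor>x\<rfloor> :: real) \<in> \<int>" by simp
    ultimately show ?thesis by blast
  next
    case False
    then have "tnorm x = \<bar>x - (of_int \<lfloor>x\<rfloor> + 1)\<bar>" unfolding tnorm_def f using a by simp
    moreover have "(of_int \<lfloor>x\<rfloor> + 1 :: real) \<in> \<int>" by simp
    ultimately show ?thesis by blast
  qed
qed

lemma tnorm_lip: "tnorm y \<ge> tnorm x - \<bar>x - y\<bar>"
proof -
  obtain n where "n \<in> \<int>" "tnorm y = \<bar>y - n\<bar>" using tnorm_exists by blast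
  with tnorm_le[of n x] show ?thesis by linarith
qed

lemma tnorm_int_add: "j \<in> \<int> \<Longrightarrow> tnorm (j + t) \<le> \<bar>t\<bar>"
  using tnorm_le[of j "j+t"] by simp

lemma tnorm_neg: "tnorm (-x) = tnorm x"
proof (cases "x \<in> \<int>")
  case True
  then have "frac x = 0" by simp
  moreover have "frac (-x) = 0" using True by (simp add: frac_neg)
  ultimately show ?thesis unfolding tnorm_def by (simp only:)
next
  case False
  then have "frac (-x) = 1 - frac x" by (simp add: frac_neg)
  then show ?thesis by (simp add: tnorm_def min.commute)
qed

lemma tnorm_nonneg: "tnorm x \<ge> 0"
  unfolding tnorm_def using frac_ge_0 frac_lt_1 by (smt (verit))

lemma tnorm_le_half: "tnorm x \<le> 1/2"
  unfolding tnorm_def by linarith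

lemma union_meas:
  fixes n :: nat and c :: real
  assumes n: "n \<ge> 1" and c: "0 \<le> c" "c \<le> 1"
  shows "measure lborel (\<Union>k\<in>{..<n}. {real k / n ..< (real k + c) / n}) = c"
proof -
  have "measure lborel (\<Union>k\<in>{..<n}. {real k / n ..< (real k + c) / n})
      = (\<Sum>k\<in>{..<n}. measure lborel {real k / n ..< (real k + c) / n})"
  proof (rule measure_finite_Union)
    show "disjoint_family_on (\<lambda>k. {real k / real n..<(real k + c) / real n}) {..<n}"
      unfolding disjoint_family_on_def
    proof (intro ballI impI)
      fix k l assume "k \<in> {..<n}" "l \<in> {..<n}" "k \<noteq> l"
      then have "k < l \<or> l < k" by auto
      then have "real k + c \<le> real l \<or> real l + c \<le> real k" using c by auto
      then have "(real k + c) / n \<le> real l / n \<or> (real l + c) / n \<le> real k / n"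
        using n by (auto intro: divide_right_mono)
      then show "{real k / real n..<(real k + c) / real n} \<inter> {real l / real n..<(real l + c) / real n} = {}"
        by auto
    qed
  next
    fix k :: nat
    show "emeasure lborel {real k / real n..<(real k + c) / real n} \<noteq> \<infinity>"
      by (cases "real k / real n \<le> (real k + c) / real n") auto
  qed auto
  also have "\<dots> = (\<Sum>k\<in>{..<n}. c / n)"
  proof (rule sum.cong)
    fix k assume "k \<in> {..<n}"
    have "real k / n \<le> (real k + c) / n" using c n by (auto intro: divide_right_mono)
    then show "measure lborel {real k / n ..< (real k + c) / n} = c / n"
      by (simp add: diff_divide_distrib[symmetric])
  qed simp
  also have "\<dots> = c" using n by simp
  finally show ?thesis .
qed

lemma Md_nonneg_bdd:
  "bdd_above {measure lborel A | A. A \<in> sets borel \<and> A \<subseteq> {0..<1} \<and>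
      (\<forall>x\<in>A. \<forall>y\<in>A. \<forall>d\<in>D. \<not> tcong (x - y) d)}"
proof (rule bdd_aboveI[of _ 1], clarify)
  fix A :: "real set" assume A: "A \<in> sets borel" "A \<subseteq> {0..<1}"
  have sub: "A \<subseteq> {0..1}" using A(2) by auto
  have fm: "{0..1::real} \<in> fmeasurable lborel" using fmeasurable_cbox[of "0::real" 1]
    by (simp only: cbox_interval)
  have "A \<in> sets lborel" using A(1) by (simp only: sets_lborel)
  then have "measure lborel A \<le> measure lborel {0..1::real}"
    using measure_mono_fmeasurable[OF sub _ fm] by blast
  then show "measure lborel A \<le> 1" by simp
qed

lemma Md_nonneg: "Md_T D \<ge> 0"
proof -
  have "(0::real) \<in> {measure lborel A | A. A \<in> sets borel \<and> A \<subseteq> {0..<1} \<and>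
      (\<forall>x\<in>A. \<forall>y\<in>A. \<forall>d\<in>D. \<not> tcong (x - y) d)}"
    by (rule CollectI, rule exI[of _ "{}"]) simp
  then show ?thesis unfolding Md_T_def
    by (rule cSup_upper2[OF _ order_refl Md_nonneg_bdd])
qed

lemma Md_ge:
  fixes \<alpha> :: "real^'r::finite" and N :: int and c :: real
  assumes c: "0 < c" "c < 1" and big: "\<forall>i. tnorm (of_int N * \<alpha>$i) > c"
  shows "Md_T (range (\<lambda>i. \<alpha>$i)) \<ge> c"
proof -
  have "N \<noteq> 0"
  proof
    assume "N = 0"
    with big have "tnorm 0 > c" by simp
    then show False using c by (simp add: tnorm_def)
  qed
  define n where "n = nat \<bar>N\<bar>"
  have n: "n \<ge> 1" using \<open>N \<noteq> 0\<close> by (simp add: n_def)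
  have nN: "real n = of_int \<bar>N\<bar>" unfolding n_def by simp
  have Nn: "of_int N = real n \<or> of_int N = - real n"
  proof (cases "N \<ge> 0")
    case True then have "\<bar>N\<bar> = N" by simp
    then show ?thesis using nN by simp
  next
    case False then have "\<bar>N\<bar> = - N" by simp
    then show ?thesis using nN by simp
  qed
  define A where "A = (\<Union>k\<in>{..<n}. {real k / n ..< (real k + c) / n})"
  have measA: "measure lborel A = c" unfolding A_def using union_meas[OF n] c by simp
  have Aborel: "A \<in> sets borel" unfolding A_def by auto
  have Asub: "A \<subseteq> {0..<1}"
  proof
    fix x assume "x \<in> A"
    then obtain k where k: "k < n" "real k / n \<le> x" "x < (real k + c) / n" unfolding A_def by auto
    have "k + 1 \<le> n" using k(1) by simp
    then have "real k + 1 \<le> real n" by (metis of_nat_1 of_nat_add of_nat_le_iff)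
    then have "real k + c \<le> real n" using c by linarith
    then have h1: "(real k + c) / n \<le> 1" using n by simp
    have h2: "real k / n \<ge> 0" by simp
    have "0 \<le> x" using k(2) h2 by linarith
    moreover have "x < 1" using k(3) h1 by linarith
    ultimately show "x \<in> {0..<1}" by simp
  qed
  have Arep: "\<exists>k::int. \<exists>t. real n * x = of_int k + t \<and> 0 \<le> t \<and> t < c" if "x \<in> A" for x
  proof -
    from that have "x \<in> (\<Union>k\<in>{..<n}. {real k / n ..< (real k + c) / n})" unfolding A_def .
    then obtain k where k: "k < n" "real k / n \<le> x" "x < (real k + c) / n" by auto
    have npos: "real n > 0" using n by simp
    have "real k \<le> real n * x" "real n * x < real k + c"
      using k npos by (simp_all add: pos_divide_le_eq pos_less_divide_eq mult.commute)
    then show ?thesis by (intro exI[of _ "int k"] exI[of _ "real n * x - real k"]) auto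
  qed
  have Adiff: "\<forall>x\<in>A. \<forall>y\<in>A. \<forall>d\<in>range (\<lambda>i. \<alpha>$i). \<not> tcong (x - y) d"
  proof (intro ballI notI)
    fix x y d assume x: "x \<in> A" and y: "y \<in> A" and d: "d \<in> range (\<lambda>i. \<alpha>$i)"
      and tc: "tcong (x - y) d"
    obtain i where di: "d = \<alpha>$i" using d by auto
    obtain k t where kt: "real n * x = of_int k + t" "0 \<le> t" "t < c" using Arep[OF x] by blast
    obtain l s where ls: "real n * y = of_int l + s" "0 \<le> s" "s < c" using Arep[OF y] by blast
    obtain m where m: "x - y - d = of_int m" using tc unfolding tcong_def using Ints_cases by blast
    have eq: "real n * d = of_int (k - l - int n * m) + (t - s)"
    proof -
      have "real n * d = real n * x - real n * y - real n * (x - y - d)" by (simp add: algebra_simps)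
      also have "\<dots> = (of_int k + t) - (of_int l + s) - real n * of_int m" using kt(1) ls(1) m by simp
      also have "\<dots> = of_int (k - l - int n * m) + (t - s)" by simp
      finally show ?thesis .
    qed
    have "tnorm (real n * d) \<le> \<bar>t - s\<bar>" unfolding eq by (rule tnorm_int_add) (rule Ints_of_int)
    also have "\<dots> < c" using kt(2,3) ls(2,3) unfolding abs_less_iff by linarith
    finally have lt: "tnorm (real n * d) < c" .
    have "tnorm (of_int N * d) = tnorm (real n * d)"
    proof (cases "of_int N = real n")
      case True then show ?thesis by simp
    next
      case False
      then have "of_int N = - real n" using Nn by blast
      then show ?thesis using tnorm_neg[of "real n * d"] by simp
    qed
    moreover have "c < tnorm (of_int N * d)" using big di by blast
    ultimately show False using lt by linarith
  qed
  have mem: "c \<in> {measure lborel A | A. A \<in> sets borel \<and> A \<subseteq> {0..<1} \<and>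
      (\<forall>x\<in>A. \<forall>y\<in>A. \<forall>d\<in>range (\<lambda>i. \<alpha>$i). \<not> tcong (x - y) d)}"
    using measA Aborel Asub Adiff by blast
  show ?thesis unfolding Md_T_def
    by (rule cSup_upper2[OF mem order_refl Md_nonneg_bdd])
qed


lemma tnorm_add_int: "tnorm (x + of_int k) = tnorm x"
  by (simp add: tnorm_def)

lemma point_le_Md:
  fixes \<alpha> \<beta> :: "real^'r::finite"
  assumes \<beta>: "\<beta> \<in> Zorbit_closure \<alpha>"
  shows "Min (range (\<lambda>i. tnorm (\<beta> $ i))) \<le> Md_T (range (\<lambda>i. \<alpha>$i))"
proof -
  define \<delta> where "\<delta> = Min (range (\<lambda>i. tnorm (\<beta> $ i)))"
  have \<delta>le: "\<delta> \<le> tnorm (\<beta> $ i)" for i unfolding \<delta>_def by (rule Min_le) auto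
  obtain i0 :: 'r where True by blast
  have \<delta>half: "\<delta> \<le> 1/2" using \<delta>le[of i0] tnorm_le_half[of "\<beta> $ i0"] by linarith
  show ?thesis unfolding \<delta>_def[symmetric]
  proof (rule field_le_epsilon)
    fix e :: real assume e: "0 < e"
    show "\<delta> \<le> Md_T (range (\<lambda>i. \<alpha>$i)) + e"
    proof (cases "\<delta> \<le> e")
      case True then show ?thesis using Md_nonneg[of "range (\<lambda>i. \<alpha>$i)"] by linarith
    next
      case False
      obtain y where y: "y \<in> {of_int N *\<^sub>R \<alpha> + (\<chi> i. of_int (k i)) | N k. True}" "dist y \<beta> < e"
        using \<beta> e unfolding Zorbit_closure_def closure_approachable by blast
      then obtain N k where yN: "y = of_int N *\<^sub>R \<alpha> + (\<chi> i. of_int (k i))" by blast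
      have "\<forall>i. tnorm (of_int N * \<alpha>$i) > \<delta> - e"
      proof
        fix i
        have "\<bar>(y - \<beta>) $ i\<bar> \<le> norm (y - \<beta>)" by (rule component_le_norm_cart)
        then have d: "\<bar>\<beta> $ i - y $ i\<bar> < e" using y(2) by (simp add: dist_norm abs_minus_commute)
        have "tnorm (y $ i) \<ge> tnorm (\<beta> $ i) - \<bar>\<beta> $ i - y $ i\<bar>" by (rule tnorm_lip)
        moreover have "tnorm (y $ i) = tnorm (of_int N * \<alpha>$i)"
          unfolding yN using tnorm_add_int[of "of_int N * \<alpha>$i" "k i"] by simp
        ultimately show "tnorm (of_int N * \<alpha>$i) > \<delta> - e" using d \<delta>le[of i] by linarith
      qed
      then have "\<delta> - e \<le> Md_T (range (\<lambda>i. \<alpha>$i))"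
        using False \<delta>half e by (intro Md_ge) auto
      then show ?thesis by linarith
    qed
  qed
qed

theorem mainTheorem13:
  fixes \<alpha> :: "real^'r::finite"
  assumes "\<forall>i. \<alpha> $ i \<notin> \<int>"
  shows "Md_T (range (\<lambda>i. \<alpha> $ i)) \<ge> kappa_T \<alpha>"
proof -
  define S where "S = {Min (range (\<lambda>i. tnorm (\<beta> $ i))) | \<beta>. \<beta> \<in> Zorbit_closure \<alpha>}"
  have z: "(\<chi> i. of_int ((\<lambda>_::'r. 0::int) i)) = (0::real^'r)"
    by (simp add: vec_eq_iff)
  have eqa: "\<alpha> = of_int 1 *\<^sub>R \<alpha> + (\<chi> i. of_int ((\<lambda>_::'r. 0::int) i))"
    unfolding z by simp
  have "\<alpha> \<in> {of_int N *\<^sub>R \<alpha> + (\<chi> i. of_int (k i)) | N k. True}"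
    by (rule CollectI, rule exI[of _ 1], rule exI[of _ "\<lambda>_::'r. 0::int"]) (rule conjI[OF eqa TrueI])
  then have aZ: "\<alpha> \<in> Zorbit_closure \<alpha>" unfolding Zorbit_closure_def
    by (rule subsetD[OF closure_subset])
  have mem: "Min (range (\<lambda>i. tnorm (\<alpha> $ i))) \<in> S" unfolding S_def
    by (rule CollectI, rule exI[of _ \<alpha>], rule conjI[OF refl aZ])
  then have ne: "S \<noteq> {}" by (intro notI) (simp only: empty_iff)
  have ub: "x \<le> Md_T (range (\<lambda>i. \<alpha> $ i))" if "x \<in> S" for x
  proof -
    from that obtain \<beta> where x: "x = Min (range (\<lambda>i. tnorm (\<beta> $ i)))" and b: "\<beta> \<in> Zorbit_closure \<alpha>"
      unfolding S_def by (elim CollectE exE conjE)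
    show ?thesis unfolding x by (rule point_le_Md[OF b])
  qed
  show ?thesis unfolding kappa_T_def S_def[symmetric]
    by (rule cSup_least[OF ne ub])
qed

end
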